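(* Let $a>0$. The polynomial equation $27x^3(a-x)-(3a-x)^3=0$ in the real unknown $x$ has a positive real root if and only if $a\le a_0$ or $a\ge a_c$, where $a_0=\frac{2}{27}\,(26+15\sqrt3)^{-1}$ and $a_c=\frac{2(26+15\sqrt3)}{27}$. *)

theory Defs
  imports Complex_Main
begin

end

theory Submission
  imports Defs
begin

lemma key_id:
  fixes r a x :: real
  assumes "r^2 = 3"
  shows "a*(3*a-x)^3 - 2*(26+15*r)*(a-x)*x^3 = (a - (2+r)/3*x)^2 * (27*a^2+(9+18*r)*a*x+(36+18*r)*x^2)"
proof -
  have "9*(a*(3*a-x)^3 - 2*(26+15*r)*(a-x)*x^3) = (3*a - (2+r)*x)^2 * (27*a^2+(9+18*r)*a*x+(36+18*r)*x^2)"
  proof -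
    have "9*(a*(3*a-x)^3 - 2*(26+15*r)*(a-x)*x^3) - (3*a - (2+r)*x)^2 * (27*a^2+(9+18*r)*a*x+(36+18*r)*x^2)
      = (r^2 - 3) * (-18*a*x^3*r - 18*x^4*r + 81*a^2*x^2 + 27*a*x^3 - 108*x^4)"
      by (simp add: algebra_simps power2_eq_square power3_eq_cube power4_eq_xxxx)
    then show ?thesis using assms by simp
  qed
  moreover have "(3*a - (2+r)*x)^2 = 9 * (a - (2+r)/3*x)^2"
    by (simp add: power2_eq_square algebra_simps)
  ultimately show ?thesis by simp
qed

lemma sqrt3_lo: "1.7 < sqrt (3::real)"
  by (rule real_less_rsqrt) (simp add: power2_eq_square)

lemma sqrt3_hi: "sqrt (3::real) < 1.75"
  by (rule real_less_lsqrt) (simp_all add: power2_eq_square)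

lemma quad_pos:
  fixes r a x :: real
  assumes "r^2 = 3" "x > 0" "a > 0"
  shows "27*a^2+(9+18*r)*a*x+(36+18*r)*x^2 \<ge> 0"
proof -
  have r: "r = sqrt 3 \<or> r = - sqrt 3" using assms(1)
    by (metis power2_eq_iff real_sqrt_pow2 zero_le_numeral)
  have b: "1.7 < sqrt 3" "sqrt 3 < 1.75"
    using sqrt3_lo sqrt3_hi by auto
  show ?thesis
  proof (cases "r = sqrt 3")
    case True
    then have "r > 0" by simp
    then show ?thesis using assms by (simp add: add_nonneg_nonneg mult_nonneg_nonneg)
  next
    case False
    then have rr: "r = - sqrt 3" using r by blast
    have "27*a^2+(9+18*r)*a*x+(36+18*r)*x^2 = 27*(a + (9+18*r)/54*x)^2 + ((36+18*r) - (9+18*r)^2/108)*x^2"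
      by (simp add: power2_eq_square field_simps)
    moreover have "(36+18*r) - (9+18*r)^2/108 > 0"
    proof -
      have "(9+18*r)^2 = 81 + 324*r + 324*3" using assms(1) by (simp add: power2_eq_square algebra_simps)
      then show ?thesis using rr b by simp
    qed
    ultimately show ?thesis by (simp add: add_nonneg_nonneg)
  qed
qed

lemma inv_eq: "inverse (26 + 15 * sqrt 3) = 26 - 15 * sqrt (3::real)"
proof -
  have "(26 + 15 * sqrt 3) * (26 - 15 * sqrt (3::real)) = 1"
    by (simp add: algebra_simps power2_eq_square)
  then show ?thesis by (metis inverse_unique)
qed

theorem mainTheorem5:
  fixes a :: real
  assumes "a > 0"
  shows "(\<exists>x::real. x > 0 \<and> 27 * x^3 * (a - x) - (3 * a - x)^3 = 0) \<longleftrightarrow>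
         (a \<le> 2 / 27 * inverse (26 + 15 * sqrt 3) \<or> a \<ge> 2 * (26 + 15 * sqrt 3) / 27)"
proof -
  define r where "r = sqrt (3::real)"
  have r2: "r^2 = 3" and r2': "(-r)^2 = 3" by (simp_all add: r_def)
  have b: "1.7 < r" "r < 1.75"
    unfolding r_def using sqrt3_lo sqrt3_hi by auto
  have a0: "2 / 27 * inverse (26 + 15 * sqrt 3) = 2*(26 + 15*(-r))/27"
    by (simp add: inv_eq r_def)
  have ac: "2 * (26 + 15 * sqrt 3) / 27 = 2*(26+15*r)/27" by (simp add: r_def)
  let ?f = "\<lambda>x::real. 27 * x^3 * (a - x) - (3 * a - x)^3"
  have f3a: "?f (3*a) < 0" using assms by simp
  have cont: "continuous_on S ?f" for S by (intro continuous_intros)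
  show ?thesis unfolding a0 ac
  proof
    assume "\<exists>x. x > 0 \<and> ?f x = 0"
    then obtain x where x: "x > 0" "?f x = 0" by blast
    have e: "(3*a-x)^3 = 27*x^3*(a-x)" using x by simp
    have I1: "x^3*(a-x)*(27*a - 2*(26+15*r)) \<ge> 0"
    proof -
      have "x^3*(a-x)*(27*a - 2*(26+15*r)) = a*(3*a-x)^3 - 2*(26+15*r)*(a-x)*x^3"
        unfolding e by (simp add: algebra_simps)
      also have "\<dots> \<ge> 0" unfolding key_id[OF r2]
        using quad_pos[OF r2 x(1) assms] by simp
      finally show ?thesis .
    qed
    have I2: "x^3*(a-x)*(27*a - 2*(26+15*(-r))) \<ge> 0"
    proof -
      have "x^3*(a-x)*(27*a - 2*(26+15*(-r))) = a*(3*a-x)^3 - 2*(26+15*(-r))*(a-x)*x^3"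
        unfolding e by (simp add: algebra_simps)
      also have "\<dots> \<ge> 0" unfolding key_id[OF r2']
        using quad_pos[OF r2' x(1) assms] by simp
      finally show ?thesis .
    qed
    have x3: "x^3 > 0" using x by simp
    have "a \<noteq> x"
    proof
      assume "a = x" then have "(2*x)^3 = 0" using e by simp
      then show False using x by simp
    qed
    then consider "a > x" | "a < x" by linarith
    then show "a \<le> 2*(26 + 15*(-r))/27 \<or> a \<ge> 2*(26+15*r)/27"
    proof cases
      case 1
      then have "x^3*(a-x) > 0" using x3 by simp
      then have "27*a - 2*(26+15*r) \<ge> 0" using I1
        by (simp add: zero_le_mult_iff)
      then show ?thesis by simp
    next
      case 2
      then have "x^3*(a-x) < 0" using x3 by (simp add: mult_pos_neg)
      then have "27*a - 2*(26+15*(-r)) \<le> 0" using I2 2 x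
        by (simp add: zero_le_mult_iff)
      then show ?thesis by simp
    qed
  next
    assume "a \<le> 2*(26 + 15*(-r))/27 \<or> a \<ge> 2*(26+15*r)/27"
    then show "\<exists>x. x > 0 \<and> ?f x = 0"
    proof
      assume H: "a \<le> 2*(26 + 15*(-r))/27"
      define x where "x = 3*a/(2-r)"
      have d: "2 - r > 0" using b by simp
      have ax: "a = (2+(-r))/3*x" using d by (simp add: x_def)
      have xp: "x > 0" using d assms by (simp add: x_def)
      have xa: "x > 3*a" unfolding x_def using d b assms
        by (simp add: field_simps)
      have "a * ?f x = x^3*(a-x)*(27*a - 2*(26+15*(-r)))"
      proof -
        have "a*(3*a-x)^3 - 2*(26+15*(-r))*(a-x)*x^3 = 0"
          unfolding key_id[OF r2'] using ax by simp
        then show ?thesis by (simp add: algebra_simps)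
      qed
      moreover have "x^3*(a-x)*(27*a - 2*(26+15*(-r))) \<ge> 0"
      proof -
        have "x^3*(a-x) \<le> 0" using xp xa assms by (simp add: mult_nonneg_nonpos)
        moreover have "27*a - 2*(26+15*(-r)) \<le> 0" using H by simp
        ultimately show ?thesis by (simp add: mult_nonpos_nonpos)
      qed
      ultimately have af: "a * ?f x \<ge> 0" by simp
      have "?f x \<ge> 0"
      proof (rule ccontr)
        assume "\<not> ?f x \<ge> 0"
        then have "a * ?f x < 0" using assms by (intro mult_pos_neg) auto
        then show False using af by linarith
      qed
      then obtain y where "3*a \<le> y" "y \<le> x" "?f y = 0"
        using IVT'[where f="?f" and a="3*a" and b=x and y=0] f3a xa cont by fastforce
      then show ?thesis using assms by (intro exI[of _ y]) auto
    next
      assume H: "a \<ge> 2*(26+15*r)/27"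
      define x where "x = 3*a/(2+r)"
      have d: "2 + r > 0" using b by simp
      have ax: "a = (2+r)/3*x" using d by (simp add: x_def)
      have xp: "x > 0" using d assms by (simp add: x_def)
      have xa: "x < a" unfolding x_def using d b assms
        by (simp add: field_simps)
      have xa3: "x < 3*a" using xa assms by simp
      have "a * ?f x = x^3*(a-x)*(27*a - 2*(26+15*r))"
      proof -
        have "a*(3*a-x)^3 - 2*(26+15*r)*(a-x)*x^3 = 0"
          unfolding key_id[OF r2] using ax by simp
        then show ?thesis by (simp add: algebra_simps)
      qed
      moreover have "x^3*(a-x)*(27*a - 2*(26+15*r)) \<ge> 0"
        using xp xa H by simp
      ultimately have af: "a * ?f x \<ge> 0" by simp
      have "?f x \<ge> 0"
      proof (rule ccontr)
        assume "\<not> ?f x \<ge> 0"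
        then have "a * ?f x < 0" using assms by (intro mult_pos_neg) auto
        then show False using af by linarith
      qed
      then obtain y where "x \<le> y" "y \<le> 3*a" "?f y = 0"
        using IVT2'[where f="?f" and a=x and b="3*a" and y=0] f3a xa3 cont by fastforce
      then show ?thesis using xp by (intro exI[of _ y]) auto
    qed
  qed
qed

end
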